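(* Let $s>0$, let $\mu$ be a Radon measure on $\mathbb{R}^d$, and let $\varphi:[0,\infty)\to\mathbb{R}$ be a $C^\infty$ function supported in $[0,2]$ which is constant on $[0,1/2]$. Then for every $x\in\mathbb{R}^d$ and $0\le r_1<r_2$, $$\int_{r_1}^{r_2}|\Delta^s_{\mu,\varphi}(x,r)|\,\frac{dr}{r}\;\le\; c\int_{r_1/2}^{2r_2}|\Delta^s_\mu(x,r)|\,\frac{dr}{r},$$ where $c$ depends only on $\varphi$.
   Context: For a Borel function $\varphi:[0,\infty)\to\mathbb{R}$ and $t>0$, set $\varphi_t(u)=t^{-s}\varphi(u/t)$, and $$\Delta^s_{\mu,\varphi}(x,t)=\int\big(\varphi_t(|y-x|)-\varphi_{2t}(|y-x|)\big)\,d\mu(y).$$ Also $\Delta^s_\mu(x,r)=\frac{\mu(B(x,r))}{r^s}-\frac{\mu(B(x,2r))}{(2r)^s}$, with $B(x,r)$ the open ball. *)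

theory Defs
  imports "HOL-Analysis.Analysis"
begin

definition C_inf_on :: "real set \<Rightarrow> (real \<Rightarrow> real) \<Rightarrow> bool" where
  "C_inf_on S f \<longleftrightarrow> (\<forall>n. ((deriv ^^ n) f) differentiable_on S)"

definition radon_measure :: "'a::euclidean_space measure \<Rightarrow> bool" where
  "radon_measure M \<longleftrightarrow> sets M = sets borel \<and> (\<forall>K. compact K \<longrightarrow> emeasure M K < \<infinity>)"

definition phi_scale :: "real \<Rightarrow> (real \<Rightarrow> real) \<Rightarrow> real \<Rightarrow> real \<Rightarrow> real" where
  "phi_scale s \<phi> t u = t powr (-s) * \<phi> (u / t)"

definition Delta_phi :: "real \<Rightarrow> 'a::euclidean_space measure \<Rightarrow> (real \<Rightarrow> real) \<Rightarrow> 'a \<Rightarrow> real \<Rightarrow> real" where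
  "Delta_phi s \<mu> \<phi> x t =
     (\<integral>y. (phi_scale s \<phi> t (dist y x) - phi_scale s \<phi> (2*t) (dist y x)) \<partial>\<mu>)"

definition Delta :: "real \<Rightarrow> 'a::euclidean_space measure \<Rightarrow> 'a \<Rightarrow> real \<Rightarrow> real" where
  "Delta s \<mu> x r = measure \<mu> (ball x r) / r powr s - measure \<mu> (ball x (2*r)) / (2*r) powr s"

end

theory Submission
  imports Defs
begin


locale philoc =
  fixes \<phi> :: "real \<Rightarrow> real"
  assumes cinf: "C_inf_on {0<..} \<phi>"
    and supp: "\<forall>u>2. \<phi> u = 0"
    and const: "\<forall>u\<in>{0..1/2}. \<phi> u = \<phi> 0"
begin

definition G :: "real \<Rightarrow> real" where
  "G v = indicator {1/2<..<2} v * deriv \<phi> v"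

lemma diff0: "\<phi> differentiable_on {0<..}"
  using cinf unfolding C_inf_on_def by (metis funpow_0)

lemma diff1: "deriv \<phi> differentiable_on {0<..}"
  using cinf[unfolded C_inf_on_def, rule_format, of 1] by simp

lemma cont0: "continuous_on {0<..} \<phi>"
  using diff0 differentiable_imp_continuous_on by blast

lemma cont1: "continuous_on {0<..} (deriv \<phi>)"
  using diff1 differentiable_imp_continuous_on by blast

lemma hasderiv: "u > 0 \<Longrightarrow> (\<phi> has_real_derivative deriv \<phi> u) (at u)"
  using diff0 by (metis DERIV_deriv_iff_real_differentiable differentiable_on_eq_differentiable_at
     greaterThan_iff open_greaterThan)

lemma phi2: "\<phi> 2 = 0"
proof -
  have "isCont \<phi> 2" using hasderiv[of 2] by (simp add: DERIV_isCont)
  hence "(\<phi> \<longlongrightarrow> \<phi> 2) (at_right 2)"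
    by (simp add: filterlim_at_split isCont_def)
  moreover have "(\<phi> \<longlongrightarrow> 0) (at_right 2)"
  proof (rule tendsto_eventually)
    show "\<forall>\<^sub>F x in at_right 2. \<phi> x = 0"
      using supp by (auto simp: eventually_at_right_field intro!: exI[of _ 3])
  qed
  ultimately show ?thesis using tendsto_unique[OF trivial_limit_at_right_real] by blast
qed

lemma G_meas[measurable]: "G \<in> borel_measurable borel"
proof -
  have "(\<lambda>x. indicator {1/2<..<2::real} x *\<^sub>R deriv \<phi> x) \<in> borel_measurable borel"
    by (rule borel_measurable_continuous_on_indicator) (auto intro: continuous_on_subset[OF cont1])
  thus ?thesis unfolding G_def by simp
qed

lemma Gbound: "\<exists>B\<ge>0. \<forall>v. \<bar>G v\<bar> \<le> B"
proof -
  have "compact ((deriv \<phi>) ` {1/2..2})"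
    by (rule compact_continuous_image) (auto intro: continuous_on_subset[OF cont1])
  then obtain B where B: "\<forall>y\<in>(deriv \<phi>) ` {1/2..2}. norm y \<le> B"
    using compact_imp_bounded bounded_iff by metis
  have "\<forall>v. \<bar>G v\<bar> \<le> max B 0"
  proof
    fix v show "\<bar>G v\<bar> \<le> max B 0"
    proof (cases "v \<in> {1/2<..<2}")
      case True
      hence "\<bar>deriv \<phi> v\<bar> \<le> B" using B by auto
      thus ?thesis using True by (simp add: G_def)
    qed (simp add: G_def)
  qed
  thus ?thesis by (intro exI[of _ "max B 0"]) auto
qed

lemma G_integrable: "integrable lborel G"
proof -
  obtain B where B: "\<forall>v. \<bar>G v\<bar> \<le> B" using Gbound by blast
  show ?thesis
  proof (rule integrableI_bounded_set[where A="{1/2<..<2}" and B=B])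
    show "AE x in lborel. x \<in> {1 / 2<..<2} \<longrightarrow> norm (G x) \<le> B" using B by auto
  qed (auto simp: G_def)
qed

lemma FTC: assumes "u \<ge> 0" shows "\<phi> u = - (\<integral>v. G v * indicator {u<..} v \<partial>lborel)"
proof (cases "u \<ge> 2")
  case True
  have "\<phi> u = 0"
  proof (cases "u = 2")
    case True thus ?thesis using phi2 by simp
  next
    case False
    hence "u > 2" using \<open>2 \<le> u\<close> by simp
    thus ?thesis using supp by blast
  qed
  moreover have "(\<lambda>v. G v * indicator {u<..} v) = (\<lambda>v. 0)"
    using True by (auto simp: G_def indicator_def fun_eq_iff)
  ultimately show ?thesis by simp
next
  case False
  define a where "a = max u (1/2)"
  have a: "1/2 \<le> a" "a < 2" using False by (auto simp: a_def)
  have pa: "\<phi> a = \<phi> u"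
  proof (cases "u \<le> 1/2")
    case True
    hence a12: "a = 1/2" by (simp add: a_def max_def)
    moreover have "\<phi> (1/2) = \<phi> 0" using const[rule_format, of "1/2"] by simp
    moreover have "\<phi> u = \<phi> 0" using const[rule_format, of u] True assms by simp
    ultimately show ?thesis by (simp only: a12)
  next
    case False
    hence "a = u" by (simp add: a_def max_def)
    thus ?thesis by simp
  qed
  have "(\<lambda>v. G v * indicator {u<..} v) = (\<lambda>v. indicator {a<..<2} v *\<^sub>R deriv \<phi> v)"
    by (auto simp: G_def a_def indicator_def fun_eq_iff)
  hence "(\<integral>v. G v * indicator {u<..} v \<partial>lborel) = (LBINT v:{a<..<2}. deriv \<phi> v)"
    by (simp add: set_lebesgue_integral_def)
  also have "\<dots> = (LBINT v=ereal a..ereal 2. deriv \<phi> v)"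
    using a by (simp add: interval_integral_Ioo)
  also have "\<dots> = \<phi> 2 - \<phi> a"
  proof (rule interval_integral_FTC_finite)
    show "continuous_on {min a 2..max a 2} (deriv \<phi>)"
      using a by (auto intro: continuous_on_subset[OF cont1])
    fix x assume "min a 2 \<le> x" "x \<le> max a 2"
    hence "x > 0" using a by auto
    thus "(\<phi> has_vector_derivative deriv \<phi> x) (at x within {min a 2..max a 2})"
      using has_field_derivative_at_within[OF hasderiv[OF \<open>x > 0\<close>]]
      by (simp add: has_real_derivative_iff_has_vector_derivative)
  qed
  finally show ?thesis using pa phi2 by simp
qed

end


lemma radon_sets: "radon_measure (\<mu>::'a::euclidean_space measure) \<Longrightarrow> sets \<mu> = sets borel"
  by (simp add: radon_measure_def)

lemma radon_space: "radon_measure (\<mu>::'a::euclidean_space measure) \<Longrightarrow> space \<mu> = UNIV"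
  by (metis radon_sets sets_eq_imp_space_eq space_borel)

lemma radon_cball: "radon_measure (\<mu>::'a::euclidean_space measure) \<Longrightarrow> emeasure \<mu> (cball x r) < \<infinity>"
  by (simp add: radon_measure_def)

lemma radon_ball: assumes "radon_measure (\<mu>::'a::euclidean_space measure)"
  shows "emeasure \<mu> (ball x r) < \<infinity>"
proof -
  have "emeasure \<mu> (ball x r) \<le> emeasure \<mu> (cball x r)"
    by (rule emeasure_mono) (auto simp: radon_sets[OF assms])
  thus ?thesis using radon_cball[OF assms] by (meson order.strict_trans1)
qed

lemma radon_sigma_finite: assumes "radon_measure (\<mu>::'a::euclidean_space measure)"
  shows "sigma_finite_measure \<mu>"
proof (rule sigma_finite_measure.intro)
  let ?A = "range (\<lambda>n::nat. cball (0::'a) (real n))"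
  have "\<exists>n::nat. y \<in> cball 0 (real n)" for y :: 'a
  proof -
    obtain n :: nat where "norm y \<le> real n" using real_arch_simple by blast
    thus ?thesis by auto
  qed
  hence "\<Union>?A = UNIV" by auto
  thus "\<exists>A. countable A \<and> A \<subseteq> sets \<mu> \<and> \<Union> A = space \<mu> \<and> (\<forall>a\<in>A. emeasure \<mu> a \<noteq> \<infinity>)"
    using radon_cball[OF assms] radon_sets[OF assms] radon_space[OF assms]
    by (intro exI[of _ ?A]) (auto simp: less_top[symmetric])
qed

context philoc begin

lemma layer:
  fixes \<mu> :: "'a::euclidean_space measure"
  assumes R: "radon_measure \<mu>" and t: "t > 0"
  shows "Delta_phi s \<mu> \<phi> x t = -(\<integral>v. G v * (t powr (-s) * measure \<mu> (ball x (t * v))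
            - (2*t) powr (-s) * measure \<mu> (ball x (2*t * v))) \<partial>lborel)"
proof -
  interpret M: sigma_finite_measure \<mu> by (rule radon_sigma_finite[OF R])
  interpret P: pair_sigma_finite \<mu> lborel ..
  define f where "f y v = G v * (t powr (-s) * indicator (ball x (t * v)) y - (2*t) powr (-s) * indicator (ball x (2*t * v)) y)"
    for y :: 'a and v :: real
  have f_if: "f y v = G v * (t powr (-s) * (if dist x y < t * v then 1 else 0) - (2*t) powr (-s) * (if dist x y < 2*t * v then 1 else 0))" for y v
    by (simp add: f_def indicator_def)
  have sets_eq: "sets (\<mu> \<Otimes>\<^sub>M lborel) = sets (borel \<Otimes>\<^sub>M borel)"
    by (rule sets_pair_measure_cong) (auto simp: radon_sets[OF R])
  have meas: "case_prod f \<in> borel_measurable (\<mu> \<Otimes>\<^sub>M lborel)"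
  proof -
    have "(\<lambda>(y,v). G v * (t powr (-s) * (if dist x y < t * v then 1 else 0) - (2*t) powr (-s) * (if dist x y < 2*t * v then 1 else 0))) \<in> borel_measurable (borel \<Otimes>\<^sub>M borel)"
      by measurable
    moreover have "case_prod f = (\<lambda>(y,v). G v * (t powr (-s) * (if dist x y < t * v then 1 else 0) - (2*t) powr (-s) * (if dist x y < 2*t * v then 1 else 0)))"
      by (rule ext) (simp add: f_if split: prod.splits)
    ultimately show ?thesis unfolding measurable_cong_sets[OF sets_eq refl] by simp
  qed
  obtain B where B: "\<forall>v. \<bar>G v\<bar> \<le> B" "B \<ge> 0" using Gbound by blast
  have integ: "integrable (\<mu> \<Otimes>\<^sub>M lborel) (case_prod f)"
  proof (rule integrableI_bounded_set[where A="cball x (4*t) \<times> {1/2<..<2::real}" and B="B * (t powr (-s) + (2*t) powr (-s))"])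
    show "cball x (4*t) \<times> {1/2<..<2::real} \<in> sets (\<mu> \<Otimes>\<^sub>M lborel)"
      by (rule pair_measureI) (auto simp: radon_sets[OF R])
    show "case_prod f \<in> borel_measurable (\<mu> \<Otimes>\<^sub>M lborel)" by (rule meas)
    show "emeasure (\<mu> \<Otimes>\<^sub>M lborel) (cball x (4*t) \<times> {1/2<..<2::real}) < \<infinity>"
      using radon_cball[OF R] radon_sets[OF R]
      by (subst lborel.emeasure_pair_measure_Times) (auto simp: ennreal_mult_less_top)
    show "AE z in \<mu> \<Otimes>\<^sub>M lborel. z \<in> cball x (4*t) \<times> {1/2<..<2::real} \<longrightarrow> norm (case_prod f z) \<le> B * (t powr (-s) + (2*t) powr (-s))"
    proof (rule AE_I2, rule impI)
      fix z :: "'a \<times> real"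
      obtain y v where z: "z = (y, v)" by (cases z)
      have "\<bar>t powr (-s) * indicator (ball x (t * v)) y - (2*t) powr (-s) * indicator (ball x (2*t * v)) y\<bar> \<le> t powr (-s) + (2*t) powr (-s)"
        unfolding indicator_def using powr_ge_zero[of t "-s"] powr_ge_zero[of "2*t" "-s"] by (simp add: abs_if)
      hence "\<bar>G v\<bar> * \<bar>t powr (-s) * indicator (ball x (t * v)) y - (2*t) powr (-s) * indicator (ball x (2*t * v)) y\<bar> \<le> B * (t powr (-s) + (2*t) powr (-s))"
        using B by (intro mult_mono) auto
      thus "norm (case_prod f z) \<le> B * (t powr (-s) + (2*t) powr (-s))"
        by (simp add: z f_def abs_mult)
    qed
    show "AE z in \<mu> \<Otimes>\<^sub>M lborel. z \<notin> cball x (4*t) \<times> {1/2<..<2::real} \<longrightarrow> case_prod f z = 0"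
    proof (rule AE_I2, rule impI)
      fix z :: "'a \<times> real"
      obtain y v where z: "z = (y, v)" by (cases z)
      assume "z \<notin> cball x (4*t) \<times> {1/2<..<2::real}"
      hence "v \<notin> {1/2<..<2::real} \<or> (v \<in> {1/2<..<2::real} \<and> dist x y > 4*t)" using z by auto
      thus "case_prod f z = 0"
      proof
        assume "v \<notin> {1/2<..<2::real}" thus ?thesis by (simp add: z f_def G_def)
      next
        assume a: "v \<in> {1/2<..<2::real} \<and> dist x y > 4*t"
        have "t * v < t * 2" using a t by simp
        moreover have "2*t * v = 2 * (t * v)" by simp
        ultimately have "\<not> dist x y < t * v" "\<not> dist x y < 2*t * v" using a t by linarith+
        thus ?thesis by (simp add: z f_if)
      qed
    qed
  qed
  have inner_y: "(\<integral>y. f y v \<partial>\<mu>) = G v * (t powr (-s) * measure \<mu> (ball x (t * v))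
            - (2*t) powr (-s) * measure \<mu> (ball x (2*t * v)))" for v
    unfolding f_def using radon_ball[OF R] radon_sets[OF R] radon_space[OF R]
    by (simp add: integral_diff)
  have inner_v: "(\<integral>v. f y v \<partial>lborel) = -(phi_scale s \<phi> t (dist y x) - phi_scale s \<phi> (2*t) (dist y x))" for y
  proof -
    have i1: "indicator (ball x (c * v)) y = indicator {dist x y / c<..} v" if "c > 0" for c v :: real
      using that by (simp add: indicator_def field_simps)
    have "f y v = t powr (-s) * (G v * indicator {dist x y / t<..} v) - (2*t) powr (-s) * (G v * indicator {dist x y / (2*t)<..} v)" for v
    proof -
      have t2: "2*t > 0" using t by simp
      show ?thesis unfolding f_def i1[OF t] i1[OF t2] by (simp add: algebra_simps)
    qed
    hence "(\<integral>v. f y v \<partial>lborel) = t powr (-s) * (\<integral>v. G v * indicator {dist x y / t<..} v \<partial>lborel) - (2*t) powr (-s) * (\<integral>v. G v * indicator {dist x y / (2*t)<..} v \<partial>lborel)"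
      using G_integrable by (simp add: integral_diff integrable_real_mult_indicator)
    also have "\<dots> = -(phi_scale s \<phi> t (dist y x) - phi_scale s \<phi> (2*t) (dist y x))"
      using FTC[of "dist x y / t"] FTC[of "dist x y / (2*t)"] t
      by (simp add: phi_scale_def dist_commute)
    finally show ?thesis .
  qed
  have "Delta_phi s \<mu> \<phi> x t = (\<integral>y. -(\<integral>v. f y v \<partial>lborel) \<partial>\<mu>)"
    unfolding Delta_phi_def inner_v by simp
  also have "\<dots> = -(\<integral>y. (\<integral>v. f y v \<partial>lborel) \<partial>\<mu>)" by simp
  also have "(\<integral>y. (\<integral>v. f y v \<partial>lborel) \<partial>\<mu>) = (\<integral>v. (\<integral>y. f y v \<partial>\<mu>) \<partial>lborel)"
    using P.Fubini_integral[OF integ] by simp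
  finally show ?thesis unfolding inner_y .
qed

end


lemma ball_measure_mono: assumes R: "radon_measure (\<mu>::'a::euclidean_space measure)"
  shows "mono (\<lambda>r. measure \<mu> (ball x r))"
proof (rule monoI)
  fix r r' :: real assume "r \<le> r'"
  show "measure \<mu> (ball x r) \<le> measure \<mu> (ball x r')"
    using \<open>r \<le> r'\<close> radon_ball[OF R, of x r'] radon_sets[OF R]
    by (intro measure_mono_fmeasurable) (auto simp: fmeasurable_def)
qed

lemma Delta_meas: assumes R: "radon_measure (\<mu>::'a::euclidean_space measure)"
  shows "(\<lambda>r. Delta s \<mu> x r) \<in> borel_measurable borel"
proof -
  define m where "m r = measure \<mu> (ball x r)" for r
  have [measurable]: "m \<in> borel_measurable borel"
    unfolding m_def by (rule borel_measurable_mono[OF ball_measure_mono[OF R]])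
  have "(\<lambda>r. m r / r powr s - m (2*r) / (2*r) powr s) \<in> borel_measurable borel"
    by measurable
  thus ?thesis by (simp add: Delta_def m_def[abs_def])
qed

context philoc begin

lemma Gpow: assumes t: "t > 0"
  shows "G v * (t powr (-s) * measure \<mu> (ball x (t * v)) - (2*t) powr (-s) * measure \<mu> (ball x (2*t * v)))
     = G v * v powr s * Delta s \<mu> x (t * v)"
proof (cases "v \<in> {1/2<..<2}")
  case True
  hence v: "v > 0" by auto
  have e1: "(t * v) powr s = t powr s * v powr s" using t v by (simp add: powr_mult)
  have e2: "(2 * (t * v)) powr s = (2*t) powr s * v powr s" using t v by (simp add: powr_mult)
  have p: "t powr s > 0" "v powr s > 0" "(2*t) powr s > 0" using t v by auto
  have key: "G v * (t powr (-s) * a - (2*t) powr (-s) * b) = G v * v powr s * (a / (t * v) powr s - b / (2 * (t * v)) powr s)" for a b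
    unfolding e1 e2 using p by (simp add: powr_minus field_simps)
  have eq: "2 * t * v = 2 * (t * v)" by simp
  show ?thesis unfolding Delta_def eq by (rule key)
qed (simp add: G_def)

lemma boundC:
  fixes \<mu> :: "'a::euclidean_space measure"
  assumes R: "radon_measure \<mu>" and t: "t > 0"
  shows "ennreal (\<bar>Delta_phi s \<mu> \<phi> x t\<bar> / t)
     \<le> (\<integral>\<^sup>+v. ennreal (\<bar>G v\<bar> * v powr s * \<bar>Delta s \<mu> x (t * v)\<bar> / t) \<partial>lborel)"
proof -
  note [measurable] = Delta_meas[OF R]
  define h where "h v = G v * v powr s * Delta s \<mu> x (t * v)" for v
  have hm[measurable]: "h \<in> borel_measurable borel" unfolding h_def by measurable
  have D: "Delta_phi s \<mu> \<phi> x t = - (\<integral>v. h v \<partial>lborel)"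
    unfolding layer[OF R t] h_def Gpow[OF t] ..
  have b: "ennreal \<bar>Delta_phi s \<mu> \<phi> x t\<bar> \<le> (\<integral>\<^sup>+v. ennreal \<bar>h v\<bar> \<partial>lborel)"
  proof (cases "integrable lborel h")
    case True
    show ?thesis unfolding D using integral_norm_bound_ennreal[OF True] by simp
  next
    case False
    show ?thesis unfolding D not_integrable_integral_eq[OF False] by simp
  qed
  have "ennreal (\<bar>Delta_phi s \<mu> \<phi> x t\<bar> / t) = ennreal (1/t) * ennreal \<bar>Delta_phi s \<mu> \<phi> x t\<bar>"
    using t by (simp add: ennreal_mult[symmetric])
  also have "\<dots> \<le> ennreal (1/t) * (\<integral>\<^sup>+v. ennreal \<bar>h v\<bar> \<partial>lborel)"
    by (rule mult_left_mono[OF b]) simp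
  also have "\<dots> = (\<integral>\<^sup>+v. ennreal (1/t) * ennreal \<bar>h v\<bar> \<partial>lborel)"
    by (rule nn_integral_cmult[symmetric]) measurable
  also have "\<dots> = (\<integral>\<^sup>+v. ennreal (\<bar>G v\<bar> * v powr s * \<bar>Delta s \<mu> x (t * v)\<bar> / t) \<partial>lborel)"
  proof (rule nn_integral_cong)
    fix v
    show "ennreal (1/t) * ennreal \<bar>h v\<bar> = ennreal (\<bar>G v\<bar> * v powr s * \<bar>Delta s \<mu> x (t * v)\<bar> / t)"
      using t by (simp add: ennreal_mult[symmetric] h_def abs_mult)
  qed
  finally show ?thesis .
qed

end


context philoc begin

lemma inner_bound:
  fixes \<mu> :: "'a::euclidean_space measure"
  assumes R: "radon_measure \<mu>" and r1: "0 \<le> r1" and v: "v \<in> {1/2<..<2}"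
  shows "(\<integral>\<^sup>+r. ennreal (\<bar>Delta s \<mu> x (r * v)\<bar> / r) * indicator {r1..r2} r \<partial>lborel)
     \<le> (\<integral>\<^sup>+r\<in>{r1/2..2*r2}. ennreal (\<bar>Delta s \<mu> x r\<bar> / r) \<partial>lborel)"
proof -
  note [measurable] = Delta_meas[OF R]
  let ?A = "{r1/2..2*r2}"
  define f where "f r = ennreal (\<bar>Delta s \<mu> x r\<bar> / r) * indicator ?A r" for r
  have fm[measurable]: "f \<in> borel_measurable borel" unfolding f_def by measurable
  have v0: "v > 0" "v \<noteq> 0" using v by auto
  have "(\<integral>\<^sup>+r. ennreal (\<bar>Delta s \<mu> x (r * v)\<bar> / r) * indicator {r1..r2} r \<partial>lborel)
      \<le> (\<integral>\<^sup>+r. ennreal v * f (0 + v * r) \<partial>lborel)"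
  proof (rule nn_integral_mono)
    fix r
    show "ennreal (\<bar>Delta s \<mu> x (r * v)\<bar> / r) * indicator {r1..r2} r \<le> ennreal v * f (0 + v * r)"
    proof (cases "r \<in> {r1..r2} \<and> r > 0")
      case True
      hence rr: "r1 \<le> r" "r \<le> r2" "r > 0" by auto
      have h1: "1 * r < (v * 2) * r" using v rr by (intro mult_strict_right_mono) auto
      have h2: "v * r \<le> 2 * r" using v rr by (intro mult_right_mono) auto
      have h3: "(v * 2) * r = 2 * (v * r)" by simp
      have "r1/2 \<le> v * r" "v * r \<le> 2 * r2" using h1 h2 h3 rr r1 by linarith+
      hence "v * r \<in> ?A" by simp
      hence "ennreal v * f (0 + v * r) = ennreal v * ennreal (\<bar>Delta s \<mu> x (v * r)\<bar> / (v * r))"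
        by (simp add: f_def)
      also have "\<dots> = ennreal (v * (\<bar>Delta s \<mu> x (v * r)\<bar> / (v * r)))"
        by (rule ennreal_mult[symmetric]) (use v0 rr in auto)
      also have "v * (\<bar>Delta s \<mu> x (v * r)\<bar> / (v * r)) = \<bar>Delta s \<mu> x (r * v)\<bar> / r"
        using v0 True by (simp add: field_simps mult.commute)
      finally show ?thesis using True by simp
    next
      case False
      hence "r \<in> {r1..r2} \<Longrightarrow> r = 0" using r1 by auto
      thus ?thesis by (cases "r \<in> {r1..r2}") (auto simp: indicator_def)
    qed
  qed
  also have "\<dots> = ennreal v * (\<integral>\<^sup>+r. f (0 + v * r) \<partial>lborel)"
    by (rule nn_integral_cmult) measurable
  also have "\<dots> = (\<integral>\<^sup>+r. f r \<partial>lborel)"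
    using nn_integral_real_affine[OF fm v0(2), of 0] v0 by simp
  finally show ?thesis unfolding f_def .
qed

lemma Gint_bound: assumes B: "\<forall>v. \<bar>G v\<bar> \<le> B" "B \<ge> 0" and s: "s \<ge> 0"
  shows "(\<integral>\<^sup>+v. ennreal (\<bar>G v\<bar> * v powr s) \<partial>lborel) \<le> ennreal (B * 2 powr s * 2)"
proof -
  have "(\<integral>\<^sup>+v. ennreal (\<bar>G v\<bar> * v powr s) \<partial>lborel) \<le> (\<integral>\<^sup>+v. ennreal (B * 2 powr s) * indicator {1/2<..<2::real} v \<partial>lborel)"
  proof (rule nn_integral_mono)
    fix v :: real
    show "ennreal (\<bar>G v\<bar> * v powr s) \<le> ennreal (B * 2 powr s) * indicator {1/2<..<2} v"
    proof (cases "v \<in> {1/2<..<2}")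
      case True
      hence "v powr s \<le> 2 powr s" using s by (intro powr_mono2) auto
      hence "\<bar>G v\<bar> * v powr s \<le> B * 2 powr s" using B by (intro mult_mono) auto
      thus ?thesis using True by (simp add: ennreal_leI)
    qed (simp add: G_def)
  qed
  also have "\<dots> = ennreal (B * 2 powr s) * ennreal (3/2)"
    by (subst nn_integral_cmult_indicator) auto
  also have "\<dots> \<le> ennreal (B * 2 powr s * 2)"
    using B by (simp add: ennreal_mult[symmetric])
  finally show ?thesis .
qed

end


theorem lemma2p2:
  fixes s :: real and \<phi> :: "real \<Rightarrow> real"
  assumes "s > 0"
    and "C_inf_on {0<..} \<phi>"
    and "\<forall>u>2. \<phi> u = 0"
    and "\<forall>u\<in>{0..1/2}. \<phi> u = \<phi> 0"
  shows "\<exists>c::real. c \<ge> 0 \<and>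
    (\<forall>(\<mu>::'a::euclidean_space measure) x r1 r2. radon_measure \<mu> \<longrightarrow> 0 \<le> r1 \<longrightarrow> r1 < r2 \<longrightarrow>
       (\<integral>\<^sup>+ r\<in>{r1..r2}. ennreal (\<bar>Delta_phi s \<mu> \<phi> x r\<bar> / r) \<partial>lborel)
       \<le> ennreal c * (\<integral>\<^sup>+ r\<in>{r1/2..2*r2}. ennreal (\<bar>Delta s \<mu> x r\<bar> / r) \<partial>lborel))"
proof -
  interpret philoc \<phi> using assms(2-4) by unfold_locales
  obtain B where B: "\<forall>v. \<bar>G v\<bar> \<le> B" "B \<ge> 0" using Gbound by blast
  define c where "c = B * 2 powr s * 2"
  show ?thesis
  proof (intro exI[of _ c] conjI allI impI)
    show "c \<ge> 0" using B by (simp add: c_def)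
    fix \<mu> :: "'a measure" and x :: 'a and r1 r2 :: real
    assume R: "radon_measure \<mu>" and r1: "0 \<le> r1" and "r1 < r2"
    note [measurable] = Delta_meas[OF R]
    define I where "I = (\<integral>\<^sup>+ r\<in>{r1/2..2*r2}. ennreal (\<bar>Delta s \<mu> x r\<bar> / r) \<partial>lborel)"
    define F where "F v r = ennreal (\<bar>G v\<bar> * v powr s * \<bar>Delta s \<mu> x (r * v)\<bar> / r) * indicator {r1..r2} r" for v r :: real
    have Fm: "case_prod F \<in> borel_measurable (lborel \<Otimes>\<^sub>M lborel)"
      unfolding F_def by measurable
    have "(\<integral>\<^sup>+ r\<in>{r1..r2}. ennreal (\<bar>Delta_phi s \<mu> \<phi> x r\<bar> / r) \<partial>lborel)
        \<le> (\<integral>\<^sup>+ r. (\<integral>\<^sup>+ v. F v r \<partial>lborel) \<partial>lborel)"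
    proof (rule nn_integral_mono)
      fix r :: real
      show "ennreal (\<bar>Delta_phi s \<mu> \<phi> x r\<bar> / r) * indicator {r1..r2} r \<le> (\<integral>\<^sup>+ v. F v r \<partial>lborel)"
      proof (cases "r \<in> {r1..r2} \<and> r > 0")
        case True
        have "ennreal (\<bar>Delta_phi s \<mu> \<phi> x r\<bar> / r) \<le> (\<integral>\<^sup>+v. ennreal (\<bar>G v\<bar> * v powr s * \<bar>Delta s \<mu> x (r * v)\<bar> / r) \<partial>lborel)"
          using boundC[OF R, of r] True by simp
        thus ?thesis using True by (simp add: F_def)
      next
        case False
        hence "r \<in> {r1..r2} \<Longrightarrow> r = 0" using r1 by auto
        thus ?thesis by (cases "r \<in> {r1..r2}") (auto simp: indicator_def)
      qed
    qed
    also have "\<dots> = (\<integral>\<^sup>+ v. (\<integral>\<^sup>+ r. F v r \<partial>lborel) \<partial>lborel)"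
      by (rule lborel_pair.Fubini'[OF Fm])
    also have "\<dots> \<le> (\<integral>\<^sup>+ v. ennreal (\<bar>G v\<bar> * v powr s) * I \<partial>lborel)"
    proof (rule nn_integral_mono)
      fix v :: real
      show "(\<integral>\<^sup>+ r. F v r \<partial>lborel) \<le> ennreal (\<bar>G v\<bar> * v powr s) * I"
      proof (cases "v \<in> {1/2<..<2}")
        case True
        have "(\<integral>\<^sup>+ r. F v r \<partial>lborel) = (\<integral>\<^sup>+ r. ennreal (\<bar>G v\<bar> * v powr s) * (ennreal (\<bar>Delta s \<mu> x (r * v)\<bar> / r) * indicator {r1..r2} r) \<partial>lborel)"
        proof (rule nn_integral_cong)
          fix r :: real
          show "F v r = ennreal (\<bar>G v\<bar> * v powr s) * (ennreal (\<bar>Delta s \<mu> x (r * v)\<bar> / r) * indicator {r1..r2} r)"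
          proof (cases "r \<in> {r1..r2}")
            case True
            hence "r \<ge> 0" using r1 by auto
            hence "ennreal (\<bar>G v\<bar> * v powr s * (\<bar>Delta s \<mu> x (r * v)\<bar> / r)) = ennreal (\<bar>G v\<bar> * v powr s) * ennreal (\<bar>Delta s \<mu> x (r * v)\<bar> / r)"
              by (intro ennreal_mult) auto
            thus ?thesis using True by (simp add: F_def)
          qed (simp add: F_def)
        qed
        also have "\<dots> = ennreal (\<bar>G v\<bar> * v powr s) * (\<integral>\<^sup>+ r. ennreal (\<bar>Delta s \<mu> x (r * v)\<bar> / r) * indicator {r1..r2} r \<partial>lborel)"
          by (rule nn_integral_cmult) measurable
        also have "\<dots> \<le> ennreal (\<bar>G v\<bar> * v powr s) * I"
          unfolding I_def by (rule mult_left_mono[OF inner_bound[OF R r1 True]]) simp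
        finally show ?thesis .
      next
        case False
        hence "F v r = 0" for r by (simp add: F_def G_def)
        thus ?thesis by simp
      qed
    qed
    also have "\<dots> = (\<integral>\<^sup>+ v. ennreal (\<bar>G v\<bar> * v powr s) \<partial>lborel) * I"
      by (rule nn_integral_multc) measurable
    also have "\<dots> \<le> ennreal c * I"
      unfolding c_def by (rule mult_right_mono[OF Gint_bound[OF B]]) (use assms(1) in auto)
    finally show "(\<integral>\<^sup>+ r\<in>{r1..r2}. ennreal (\<bar>Delta_phi s \<mu> \<phi> x r\<bar> / r) \<partial>lborel)
       \<le> ennreal c * (\<integral>\<^sup>+ r\<in>{r1/2..2*r2}. ennreal (\<bar>Delta s \<mu> x r\<bar> / r) \<partial>lborel)"
      unfolding I_def .
  qed
qed


end
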